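(* Let $n\ge1$ and let $\alpha=(a_n,\ldots,a_1)$ and $\beta=(b_n,\ldots,b_1)$ be restricted sequences of length $n$. (i) If $\beta<\alpha$ in the lexicographic order, then $\langle e_\beta,e'_\alpha\rangle_n=0$. (ii) $\langle e_\alpha,e'_\alpha\rangle_n=\dfrac{\Delta_{a_n}}{\Delta_{a_n-1}}\cdots\dfrac{\Delta_{a_1}}{\Delta_{a_1-1}}$.
   Context: A non-crossing $n$-chord diagram is (the isotopy class of) a set of $n$ pairwise disjoint arcs in the closed upper half-plane with endpoints at $1,2,\ldots,2n$; equivalently a non-crossing perfect matching of $\{1,\ldots,2n\}$. Let $D_n$ be the set of these ($D_0=\{\phi\}$). For $1\le k\le 2n+1$, $l_k:D_n\to D_{n+1}$: $l_k(\alpha)$ matches $k$ with $k+1$, and each old point $i$ becomes $i$ if $i<k$ and $i+2$ if $i\ge k$, old pairs kept. For $\alpha\in D_n$ ($n\ge1$) let $k_n$ be the smallest $k$ with $k$ matched to $k+1$, and $\alpha'\in D_{n-1}$ be $\alpha$ with that arc removed (renumbered), so $\alpha=l_{k_n}(\alpha')$. The restricted sequence of $\alpha$ is $(k_n,\ldots,k_1)$ with $(k_{n-1},\ldots,k_1)$ the restricted sequence of $\alpha'$. This is a bijection from $D_n$ to restricted sequences of length $n$; $e_{(a_n,\ldots,a_1)}$ denotes the corresponding diagram. Lexicographic order: $(b_n,\ldots,b_1)<(a_n,\ldots,a_1)$ if at the largest index $i$ with $b_i\ne a_i$ one has $b_i<a_i$. $V_n$ is the $\mathbb{Q}(q)$-vector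 space with basis $D_n$ ($q$ an indeterminate), $l_k$ extended linearly. The Markov form is the bilinear extension of $\langle\alpha,\beta\rangle_n=q^c$, $c$ the number of closed curves obtained by gluing $\alpha$ to the mirror image of $\beta$ in the lower half-plane along $1,\ldots,2n$. $\Delta_{-1}=0$, $\Delta_0=1$, $\Delta_k=q\Delta_{k-1}-\Delta_{k-2}$ ($k\ge1$). $e'$: $e'_{(1)}=e_{(1)}$; for $n\ge2$, $e'_{(a_n,\ldots,a_1)}=l_{a_n}(e'_{(a_{n-1},\ldots,a_1)})-\frac{\Delta_{a_n-2}}{\Delta_{a_n-1}}e'_{(a_n-1,a_{n-1},\ldots,a_1)}$ if $a_n\ge2$, and $e'_{(1,a_{n-1},\ldots,a_1)}=l_1(e'_{(a_{n-1},\ldots,a_1)})$. *)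

theory Defs
  imports Main "HOL-Computational_Algebra.Polynomial" "HOL-Computational_Algebra.Fraction_Field"
begin

(* Chord diagrams: a diagram is a symmetric relation M on nat (the set of matched
   pairs, both orientations), i.e. a non-crossing perfect matching of {1..2n}. *)

type_synonym diagram = "(nat \<times> nat) set"

definition perfect_matching :: "nat \<Rightarrow> diagram \<Rightarrow> bool" where
  "perfect_matching n M \<longleftrightarrow>
     M \<subseteq> {1..2*n} \<times> {1..2*n} \<and> sym M \<and> (\<forall>i. (i, i) \<notin> M) \<and>
     (\<forall>i\<in>{1..2*n}. \<exists>!j. (i, j) \<in> M)"

definition non_crossing :: "diagram \<Rightarrow> bool" where
  "non_crossing M \<longleftrightarrow> (\<forall>a b c d. (a, b) \<in> M \<longrightarrow> (c, d) \<in> M \<longrightarrow> \<not> (a < c \<and> c < b \<and> b < d))"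

definition D :: "nat \<Rightarrow> diagram set" where
  "D n = {M. perfect_matching n M \<and> non_crossing M}"

definition shift :: "nat \<Rightarrow> nat \<Rightarrow> nat" where
  "shift k i = (if i < k then i else i + 2)"

definition l :: "nat \<Rightarrow> diagram \<Rightarrow> diagram" where
  "l k M = {(k, k + 1), (k + 1, k)} \<union> (\<lambda>(i, j). (shift k i, shift k j)) ` M"

definition unshift :: "nat \<Rightarrow> nat \<Rightarrow> nat" where
  "unshift k i = (if i < k then i else i - 2)"

definition remove_arc :: "nat \<Rightarrow> diagram \<Rightarrow> diagram" where
  "remove_arc k M = (\<lambda>(i, j). (unshift k i, unshift k j)) `
      {(i, j) \<in> M. i \<notin> {k, k + 1} \<and> j \<notin> {k, k + 1}}"

(* restricted sequence (k_n,...,k_1), stored as the list [k_n, ..., k_1] *)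
fun rseq :: "nat \<Rightarrow> diagram \<Rightarrow> nat list" where
  "rseq 0 M = []"
| "rseq (Suc m) M =
     (let k = (LEAST k. (k, k + 1) \<in> M) in k # rseq m (remove_arc k M))"

definition restricted :: "nat \<Rightarrow> nat list \<Rightarrow> bool" where
  "restricted n s \<longleftrightarrow> (\<exists>M\<in>D n. rseq n M = s)"

definition e :: "nat list \<Rightarrow> diagram" where
  "e s = (THE M. M \<in> D (length s) \<and> rseq (length s) M = s)"

(* lexicographic order: compare at the largest index where the sequences differ,
   i.e. at the first differing list position *)
definition lex_less :: "nat list \<Rightarrow> nat list \<Rightarrow> bool" where
  "lex_less b a \<longleftrightarrow> length b = length a \<and>
     (\<exists>i < length a. take i b = take i a \<and> b ! i < a ! i)"

type_synonym K = "rat poly fract"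

definition q :: K where
  "q = Fract [:0, 1:] 1"

fun Delta :: "nat \<Rightarrow> K" where
  "Delta 0 = 1"
| "Delta (Suc 0) = q"
| "Delta (Suc (Suc k)) = q * Delta (Suc k) - Delta k"

(* vectors in V_n: coefficient functions on diagrams (supported on D n) *)
type_synonym vec = "diagram \<Rightarrow> K"

definition basis :: "diagram \<Rightarrow> vec" where
  "basis M = (\<lambda>N. if N = M then 1 else 0)"

(* linear extension of l_k (l_k is injective) *)
definition lin_l :: "nat \<Rightarrow> vec \<Rightarrow> vec" where
  "lin_l k v = (\<lambda>N. \<Sum>M\<in>{M. l k M = N}. v M)"

(* number of closed curves obtained by gluing M with the mirror image of N *)
definition loops :: "nat \<Rightarrow> diagram \<Rightarrow> diagram \<Rightarrow> nat" where
  "loops n M N = card ({1..2*n} // ((M \<union> N)\<^sup>* \<inter> ({1..2*n} \<times> {1..2*n})))"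

definition markov :: "nat \<Rightarrow> vec \<Rightarrow> vec \<Rightarrow> K" where
  "markov n v w = (\<Sum>M\<in>D n. \<Sum>N\<in>D n. v M * w N * q ^ loops n M N)"

function e' :: "nat list \<Rightarrow> vec" where
  "e' [] = basis {}"
| "e' [a] = basis (e [a])"
| "e' (a # b # rest) =
     (if 2 \<le> a
      then (\<lambda>N. lin_l a (e' (b # rest)) N
                 - (Delta (a - 2) / Delta (a - 1)) * e' ((a - 1) # b # rest) N)
      else lin_l 1 (e' (b # rest)))"
  by pat_completeness auto
termination
  by (relation "measures [length, hd]") auto

end

theory Submission
  imports Defs
begin


lemma shift_ne: "shift j u \<noteq> j" "shift j u \<noteq> Suc j"
  by (auto simp: shift_def)

lemma unshift_shift[simp]: "unshift j (shift j u) = u"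
  by (auto simp: shift_def unshift_def)

lemma shift_unshift: "u \<noteq> j \<Longrightarrow> u \<noteq> Suc j \<Longrightarrow> shift j (unshift j u) = u"
  by (auto simp: shift_def unshift_def)

lemma shift_inj[simp]: "shift j u = shift j v \<longleftrightarrow> u = v"
  by (auto simp: shift_def)

lemma shift_less[simp]: "shift j u < shift j v \<longleftrightarrow> u < v"
  by (auto simp: shift_def)

lemma mem_l: "(u,v) \<in> l j M \<longleftrightarrow> (u=j \<and> v=Suc j) \<or> (u=Suc j \<and> v=j) \<or>
   (u \<noteq> j \<and> u \<noteq> Suc j \<and> v \<noteq> j \<and> v \<noteq> Suc j \<and> (unshift j u, unshift j v) \<in> M)"
proof
  assume "(u,v) \<in> l j M"
  then show "(u=j \<and> v=Suc j) \<or> (u=Suc j \<and> v=j) \<or>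
   (u \<noteq> j \<and> u \<noteq> Suc j \<and> v \<noteq> j \<and> v \<noteq> Suc j \<and> (unshift j u, unshift j v) \<in> M)"
    by (auto simp: l_def shift_ne)
next
  assume "(u=j \<and> v=Suc j) \<or> (u=Suc j \<and> v=j) \<or>
   (u \<noteq> j \<and> u \<noteq> Suc j \<and> v \<noteq> j \<and> v \<noteq> Suc j \<and> (unshift j u, unshift j v) \<in> M)"
  then show "(u,v) \<in> l j M"
  proof (elim disjE)
    assume h: "u \<noteq> j \<and> u \<noteq> Suc j \<and> v \<noteq> j \<and> v \<noteq> Suc j \<and> (unshift j u, unshift j v) \<in> M"
    then have "(u,v) = (shift j (unshift j u), shift j (unshift j v))" by (simp add: shift_unshift)
    then show ?thesis using h unfolding l_def by (auto intro!: image_eqI[where x="(unshift j u, unshift j v)"])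
  qed (auto simp: l_def)
qed

lemma mem_remove: "(u,v) \<in> remove_arc j M \<longleftrightarrow> (shift j u, shift j v) \<in> M"
proof
  assume "(u,v) \<in> remove_arc j M"
  then show "(shift j u, shift j v) \<in> M"
    by (auto simp: remove_arc_def shift_unshift)
next
  assume h: "(shift j u, shift j v) \<in> M"
  have "(u,v) = (unshift j (shift j u), unshift j (shift j v))" by simp
  then show "(u,v) \<in> remove_arc j M" using h shift_ne unfolding remove_arc_def
    by (auto intro!: image_eqI[where x="(shift j u, shift j v)"])
qed

lemma remove_l[simp]: "remove_arc j (l j N) = N"
  by (auto simp: mem_remove mem_l shift_ne)

definition cap :: "nat \<Rightarrow> diagram \<Rightarrow> diagram" where
  "cap j z = remove_arc j (z \<union> {(x,y). (j,x) \<in> z \<and> (Suc j,y) \<in> z} \<union> {(y,x). (j,x) \<in> z \<and> (Suc j,y) \<in> z})"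

lemma mem_cap: "(u,v) \<in> cap j z \<longleftrightarrow> (shift j u, shift j v) \<in> z \<or>
   ((j, shift j u) \<in> z \<and> (Suc j, shift j v) \<in> z) \<or> ((j, shift j v) \<in> z \<and> (Suc j, shift j u) \<in> z)"
  unfolding cap_def mem_remove by auto

lemma l_inj: "l j M = l j N \<Longrightarrow> M = N"
  by (metis remove_l)



lemma D_finite: "finite (D n)"
proof -
  have "D n \<subseteq> Pow ({1..2*n} \<times> {1..2*n})"
    by (auto simp: D_def perfect_matching_def)
  then show ?thesis by (rule finite_subset) auto
qed

lemma D0: "D 0 = {{}}"
  by (auto simp: D_def perfect_matching_def non_crossing_def sym_def)

context
  fixes n M assumes MD: "M \<in> D n"
begin
lemma D_bound: "(u,v) \<in> M \<Longrightarrow> 1 \<le> u \<and> u \<le> 2*n \<and> 1 \<le> v \<and> v \<le> 2*n"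
  using MD by (auto simp: D_def perfect_matching_def)
lemma D_irr: "(u,v) \<in> M \<Longrightarrow> u \<noteq> v"
  using MD unfolding D_def perfect_matching_def by blast
lemma D_uniq: "(u,v) \<in> M \<Longrightarrow> (u,w) \<in> M \<Longrightarrow> v = w"
proof -
  assume a: "(u,v) \<in> M" "(u,w) \<in> M"
  then have "u \<in> {1..2*n}" using D_bound by auto
  then have "\<exists>!j. (u, j) \<in> M" using MD unfolding D_def perfect_matching_def by blast
  then show "v = w" using a by blast
qed
lemma D_ex: "1 \<le> u \<Longrightarrow> u \<le> 2*n \<Longrightarrow> \<exists>v. (u,v) \<in> M"
proof -
  assume "1 \<le> u" "u \<le> 2*n"
  then have "\<exists>!j. (u, j) \<in> M" using MD unfolding D_def perfect_matching_def by simp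
  then show ?thesis by blast
qed
lemma D_nc: "(a,b) \<in> M \<Longrightarrow> (c,d) \<in> M \<Longrightarrow> a < c \<Longrightarrow> c < b \<Longrightarrow> b < d \<Longrightarrow> False"
  using MD unfolding D_def non_crossing_def by blast
lemma D_sym: "(u,v) \<in> M \<Longrightarrow> (v,u) \<in> M"
  using MD by (auto simp: D_def perfect_matching_def sym_def)
end

lemma D_intro:
  assumes "\<And>u v. (u,v) \<in> M \<Longrightarrow> 1 \<le> u \<and> u \<le> 2*n \<and> 1 \<le> v \<and> v \<le> 2*n"
    and "\<And>u v. (u,v) \<in> M \<Longrightarrow> (v,u) \<in> M"
    and "\<And>u. (u,u) \<notin> M"
    and "\<And>u v w. (u,v) \<in> M \<Longrightarrow> (u,w) \<in> M \<Longrightarrow> v = w"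
    and "\<And>u. 1 \<le> u \<Longrightarrow> u \<le> 2*n \<Longrightarrow> \<exists>v. (u,v) \<in> M"
    and "\<And>a b c d. (a,b) \<in> M \<Longrightarrow> (c,d) \<in> M \<Longrightarrow> a < c \<Longrightarrow> c < b \<Longrightarrow> b < d \<Longrightarrow> False"
  shows "M \<in> D n"
proof -
  have "M \<subseteq> {1..2*n} \<times> {1..2*n}" using assms(1) by fastforce
  moreover have "sym M" using assms(2) by (auto simp: sym_def)
  moreover have "\<forall>i\<in>{1..2*n}. \<exists>!j. (i, j) \<in> M"
  proof
    fix i assume "i \<in> {1..2*n}"
    then obtain v where "(i,v) \<in> M" using assms(5) by force
    then show "\<exists>!j. (i, j) \<in> M" using assms(4) by blast
  qed
  moreover have "non_crossing M" unfolding non_crossing_def using assms(6) by blast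
  ultimately show ?thesis using assms(3) by (simp add: D_def perfect_matching_def)
qed

lemma l_D:
  assumes z: "z \<in> D n" and j: "1 \<le> j" "j \<le> 2*n+1"
  shows "l j z \<in> D (Suc n)"
proof (rule D_intro)
  fix u v assume "(u,v) \<in> l j z"
  then show "1 \<le> u \<and> u \<le> 2*Suc n \<and> 1 \<le> v \<and> v \<le> 2*Suc n"
    using j D_bound[OF z, of "unshift j u" "unshift j v"] unfolding mem_l
    by (auto simp: unshift_def split: if_splits)
next
  fix u v assume "(u,v) \<in> l j z"
  then show "(v,u) \<in> l j z" using D_sym[OF z] unfolding mem_l by auto
next
  fix u show "(u,u) \<notin> l j z" using D_irr[OF z] unfolding mem_l by auto
next
  fix u v w assume "(u,v) \<in> l j z" "(u,w) \<in> l j z"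
  then show "v = w" using D_uniq[OF z] unfolding mem_l
    by (metis shift_unshift)
next
  fix u assume u: "1 \<le> u" "u \<le> 2 * Suc n"
  show "\<exists>v. (u,v) \<in> l j z"
  proof (cases "u = j \<or> u = Suc j")
    case True then show ?thesis unfolding mem_l by auto
  next
    case False
    then have "1 \<le> unshift j u" "unshift j u \<le> 2*n" using u j by (auto simp: unshift_def)
    then obtain w where w: "(unshift j u, w) \<in> z" using D_ex[OF z] by blast
    then have "(u, shift j w) \<in> l j z" using False unfolding mem_l by (auto simp: shift_ne)
    then show ?thesis by blast
  qed
next
  fix a b c d assume h: "(a,b) \<in> l j z" "(c,d) \<in> l j z" "a < c" "c < b" "b < d"
  show False
  proof (cases "a \<in> {j, Suc j} \<or> b \<in> {j, Suc j} \<or> c \<in> {j, Suc j} \<or> d \<in> {j, Suc j}")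
    case True
    then show ?thesis using h unfolding mem_l by auto
  next
    case False
    then have "(unshift j a, unshift j b) \<in> z" "(unshift j c, unshift j d) \<in> z" using h unfolding mem_l by auto
    moreover have "unshift j a < unshift j c" "unshift j c < unshift j b" "unshift j b < unshift j d"
      using h(3-5) False by (auto simp: unshift_def)
    ultimately show False using D_nc[OF z] by blast
  qed
qed


lemma remove_D:
  assumes M: "M \<in> D (Suc n)" and k: "(k, Suc k) \<in> M"
  shows "remove_arc k M \<in> D n" and "l k (remove_arc k M) = M"
proof -
  have kb: "1 \<le> k" "Suc k \<le> 2 * Suc n" using D_bound[OF M k] by auto
  have partk: "(k,v) \<in> M \<longleftrightarrow> v = Suc k" "(Suc k,v) \<in> M \<longleftrightarrow> v = k" "(v,k) \<in> M \<longleftrightarrow> v = Suc k" "(v,Suc k) \<in> M \<longleftrightarrow> v = k" for v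
    using D_uniq[OF M] D_sym[OF M] k by blast+
  show "remove_arc k M \<in> D n"
  proof (rule D_intro)
    fix u v assume "(u,v) \<in> remove_arc k M"
    then have h: "(shift k u, shift k v) \<in> M" by (simp add: mem_remove)
    then show "1 \<le> u \<and> u \<le> 2*n \<and> 1 \<le> v \<and> v \<le> 2*n"
      using D_bound[OF M h] kb partk shift_ne by (auto simp: shift_def split: if_splits)
  next
    fix u v assume "(u,v) \<in> remove_arc k M" then show "(v,u) \<in> remove_arc k M"
      using D_sym[OF M] by (simp add: mem_remove)
  next
    fix u show "(u,u) \<notin> remove_arc k M" using D_irr[OF M] by (auto simp: mem_remove)
  next
    fix u v w assume "(u,v) \<in> remove_arc k M" "(u,w) \<in> remove_arc k M" then show "v = w"
      using D_uniq[OF M, of "shift k u" "shift k v" "shift k w"] by (simp add: mem_remove)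
  next
    fix u assume u: "1 \<le> u" "u \<le> 2*n"
    have "1 \<le> shift k u" "shift k u \<le> 2 * Suc n" using u kb by (auto simp: shift_def)
    then obtain w where w: "(shift k u, w) \<in> M" using D_ex[OF M] by blast
    have "w \<noteq> k" "w \<noteq> Suc k" using w partk shift_ne by auto
    then have "(u, unshift k w) \<in> remove_arc k M" using w by (simp add: mem_remove shift_unshift)
    then show "\<exists>v. (u,v) \<in> remove_arc k M" by blast
  next
    fix a b c d assume "(a,b) \<in> remove_arc k M" "(c,d) \<in> remove_arc k M" "a < c" "c < b" "b < d"
    then show False using D_nc[OF M, of "shift k a" "shift k b" "shift k c" "shift k d"]
      by (simp add: mem_remove)
  qed
  show "l k (remove_arc k M) = M"
  proof (rule set_eqI, clarify)
    fix a b
    show "(a,b) \<in> l k (remove_arc k M) \<longleftrightarrow> (a,b) \<in> M"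
    proof (cases "a = k \<or> a = Suc k \<or> b = k \<or> b = Suc k")
      case True then show ?thesis unfolding mem_l using partk by auto
    next
      case False then show ?thesis unfolding mem_l mem_remove by (simp add: shift_unshift)
    qed
  qed
qed


lemma adjacent_ex:
  assumes M: "M \<in> D (Suc n)"
  shows "\<exists>k. (k, Suc k) \<in> M"
proof -
  obtain v where v: "(1,v) \<in> M" using D_ex[OF M, of 1] by auto
  define S where "S = {d. \<exists>a. (a, a + d) \<in> M \<and> d > 0}"
  have "v - 1 \<in> S" using v D_irr[OF M v] D_bound[OF M v] unfolding S_def
    by (intro CollectI exI[of _ 1]) auto
  then have "S \<noteq> {}" by auto
  define d where "d = Min S"
  have fS: "finite S" unfolding S_def
    by (rule finite_subset[of _ "{..2*Suc n}"]) (auto dest: D_bound[OF M])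
  have "d \<in> S" unfolding d_def using fS \<open>S \<noteq> {}\<close> by simp
  then obtain a where a: "(a, a+d) \<in> M" "d > 0" unfolding S_def by auto
  have dmin: "d' \<in> S \<Longrightarrow> d \<le> d'" for d' unfolding d_def using fS by simp
  show ?thesis
  proof (cases "d = 1")
    case True then show ?thesis using a by auto
  next
    case False
    have "1 \<le> Suc a" "Suc a \<le> 2 * Suc n" using D_bound[OF M a(1)] a(2) False by auto
    then obtain c where c: "(Suc a, c) \<in> M" using D_ex[OF M] by blast
    have "c \<noteq> a"
    proof
      assume "c = a"
      then have "(a, Suc a) \<in> M" using D_sym[OF M c] by simp
      then have "a + d = Suc a" using D_uniq[OF M a(1)] by simp
      then show False using False by simp
    qed
    have "c \<noteq> a + d"
    proof
      assume "c = a + d"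
      then have "(a + d, Suc a) \<in> M" using D_sym[OF M c] by simp
      moreover have "(a + d, a) \<in> M" using D_sym[OF M a(1)] .
      ultimately show False using D_uniq[OF M] by force
    qed
    have "c \<noteq> Suc a" using D_irr[OF M c] by auto
    consider "c < a" | "a + d < c" | "Suc a < c \<and> c < a + d" using \<open>c \<noteq> a\<close> \<open>c \<noteq> a + d\<close> \<open>c \<noteq> Suc a\<close> a(2) False by linarith
    then show ?thesis
    proof cases
      case 1 then show ?thesis using D_nc[OF M, of c "Suc a" a "a+d"] D_sym[OF M c] a False by auto
    next
      case 2 then show ?thesis using D_nc[OF M, of a "a+d" "Suc a" c] c a False by auto
    next
      case 3
      then have "c - Suc a \<in> S" unfolding S_def using c by (intro CollectI exI[of _ "Suc a"]) auto
      then show ?thesis using dmin 3 by fastforce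
    qed
  qed
qed



lemma rseq_length[simp]: "length (rseq m M) = m"
  by (induction m arbitrary: M) (auto simp: Let_def)

lemma least_adj:
  assumes M: "M \<in> D (Suc m)"
  shows "(LEAST k. (k, Suc k) \<in> M, Suc (LEAST k. (k, Suc k) \<in> M)) \<in> M"
    and "k' < (LEAST k. (k, Suc k) \<in> M) \<Longrightarrow> (k', Suc k') \<notin> M"
proof -
  obtain k where "(k, Suc k) \<in> M" using adjacent_ex[OF M] by blast
  then show "(LEAST k. (k, Suc k) \<in> M, Suc (LEAST k. (k, Suc k) \<in> M)) \<in> M"
    by (rule LeastI[where P="\<lambda>k. (k, Suc k) \<in> M"])
  show "k' < (LEAST k. (k, Suc k) \<in> M) \<Longrightarrow> (k', Suc k') \<notin> M"
    by (rule not_less_Least)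
qed

lemma rseq_Suc: "rseq (Suc m) M = (LEAST k. (k, Suc k) \<in> M) # rseq m (remove_arc (LEAST k. (k, Suc k) \<in> M) M)"
  by (simp add: Let_def)

lemma rseq_inj: "M \<in> D m \<Longrightarrow> N \<in> D m \<Longrightarrow> rseq m M = rseq m N \<Longrightarrow> M = N"
proof (induction m arbitrary: M N)
  case 0 then show ?case by (simp add: D0)
next
  case (Suc m)
  define k where "k = (LEAST k. (k, Suc k) \<in> M)"
  define k2 where "k2 = (LEAST k. (k, Suc k) \<in> N)"
  have eq: "k = k2" "rseq m (remove_arc k M) = rseq m (remove_arc k2 N)"
    using Suc.prems(3) unfolding rseq_Suc k_def k2_def by auto
  have kM: "(k, Suc k) \<in> M" using least_adj(1)[OF Suc.prems(1)] k_def by simp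
  have kN: "(k, Suc k) \<in> N" using least_adj(1)[OF Suc.prems(2)] k2_def eq by simp
  have "remove_arc k M = remove_arc k N"
    using Suc.IH[OF remove_D(1)[OF Suc.prems(1) kM] remove_D(1)[OF Suc.prems(2) kN]] eq by simp
  then show ?case using remove_D(2)[OF Suc.prems(1) kM] remove_D(2)[OF Suc.prems(2) kN] by metis
qed

lemma restricted_e:
  assumes "restricted m s"
  shows "e s \<in> D m" "rseq m (e s) = s" "length s = m"
proof -
  obtain M where M: "M \<in> D m" "rseq m M = s" using assms unfolding restricted_def by blast
  have len: "length s = m" using M(2) by auto
  have "e s = M" unfolding e_def len
  proof (rule the_equality)
    show "M \<in> D m \<and> rseq m M = s" using M by simp
    fix N assume "N \<in> D m \<and> rseq m N = s"
    then show "N = M" using rseq_inj[of N m M] M by simp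
  qed
  then show "e s \<in> D m" "rseq m (e s) = s" "length s = m" using M len by auto
qed

lemma restricted_0: "restricted 0 s \<longleftrightarrow> s = []"
  by (auto simp: restricted_def D0)

lemma e_Nil: "e [] = {}"
  using restricted_e(1)[of 0 "[]"] by (simp add: restricted_0 D0)

lemma restricted_cons:
  assumes "restricted (Suc m) s"
  obtains k s' where "s = k # s'" "restricted m s'" "e s = l k (e s')" "1 \<le> k" "k \<le> 2*m+1"
    "s' = [] \<Longrightarrow> k = 1" "s' \<noteq> [] \<Longrightarrow> k \<le> Suc (hd s')"
proof -
  define M where "M = e s"
  have M: "M \<in> D (Suc m)" "rseq (Suc m) M = s" using restricted_e[OF assms] M_def by auto
  define k where "k = (LEAST k. (k, Suc k) \<in> M)"
  have kM: "(k, Suc k) \<in> M" using least_adj(1)[OF M(1)] k_def by simp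
  have kmin: "k' < k \<Longrightarrow> (k', Suc k') \<notin> M" for k' using least_adj(2)[OF M(1), of k'] unfolding k_def by blast
  define M' where "M' = remove_arc k M"
  have M': "M' \<in> D m" "l k M' = M" using remove_D[OF M(1) kM] M'_def by auto
  define s' where "s' = rseq m M'"
  have "rseq (Suc m) M = k # s'" unfolding rseq_Suc k_def[symmetric] M'_def s'_def by (rule refl)
  then have s: "s = k # s'" using M(2) by simp
  have rs': "restricted m s'" unfolding restricted_def s'_def using M' by blast
  have es': "e s' = M'" using restricted_e[OF rs'] rseq_inj[OF _ M'(1), of "e s'"] s'_def by simp
  have kb: "1 \<le> k" "Suc k \<le> 2 * Suc m" using D_bound[OF M(1) kM] by auto
  have c1: "k = 1" if e0: "s' = []"
  proof -
    have "length s' = m" unfolding s'_def by simp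
    then have "m = 0" using e0 by simp
    then show "k = 1" using kb by simp
  qed
  have c2: "k \<le> Suc (hd s')" if ne: "s' \<noteq> []"
  proof (rule ccontr)
    assume "\<not> k \<le> Suc (hd s')"
    obtain m' where m': "m = Suc m'" using ne s'_def by (cases m) auto
    define k' where "k' = (LEAST k. (k, Suc k) \<in> M')"
    have hd: "hd s' = k'" unfolding s'_def m' rseq_Suc k'_def by simp
    have "(k', Suc k') \<in> M'" using least_adj(1)[OF M'(1)[unfolded m']] k'_def by simp
    then have "(shift k k', shift k (Suc k')) \<in> l k M'" by (simp add: mem_l shift_ne)
    then have "(shift k k', shift k (Suc k')) \<in> M" using M'(2) by simp
    moreover have "shift k k' = k'" "shift k (Suc k') = Suc k'" using \<open>\<not> k \<le> Suc (hd s')\<close> hd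
      by (auto simp: shift_def)
    ultimately show False using kmin[of k'] \<open>\<not> k \<le> Suc (hd s')\<close> hd by simp
  qed
  have e1: "e s = l k (e s')" using es' M'(2) M_def by simp
  have k2: "k \<le> 2*m+1" using kb(2) by simp
  show ?thesis by (rule that[OF s rs' e1 kb(1) k2 c1 c2])
qed

lemma lex_cons: "lex_less (b#\<beta>) (a#\<alpha>) \<longleftrightarrow> length \<beta> = length \<alpha> \<and> (b < a \<or> (b = a \<and> lex_less \<beta> \<alpha>))"
proof
  assume h: "lex_less (b#\<beta>) (a#\<alpha>)"
  then obtain i where i: "i < Suc (length \<alpha>)" "take i (b#\<beta>) = take i (a#\<alpha>)" "(b#\<beta>) ! i < (a#\<alpha>) ! i"
    unfolding lex_less_def by auto
  have len: "length \<beta> = length \<alpha>" using h unfolding lex_less_def by simp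
  show "length \<beta> = length \<alpha> \<and> (b < a \<or> (b = a \<and> lex_less \<beta> \<alpha>))"
  proof (cases i)
    case 0 then show ?thesis using i len by simp
  next
    case (Suc i')
    then have "b = a" "lex_less \<beta> \<alpha>" using i len unfolding lex_less_def by auto
    then show ?thesis using len by simp
  qed
next
  assume h: "length \<beta> = length \<alpha> \<and> (b < a \<or> (b = a \<and> lex_less \<beta> \<alpha>))"
  show "lex_less (b#\<beta>) (a#\<alpha>)"
  proof (cases "b < a")
    case True then show ?thesis using h unfolding lex_less_def by (intro conjI exI[of _ 0]) auto
  next
    case False
    then obtain i where "i < length \<alpha>" "take i \<beta> = take i \<alpha>" "\<beta> ! i < \<alpha> ! i" "b = a"
      using h unfolding lex_less_def by auto
    then show ?thesis using h unfolding lex_less_def by (intro conjI exI[of _ "Suc i"]) auto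
  qed
qed



lemma C1: "cap j (l j z) = z"
  by (auto simp: mem_cap mem_l shift_ne)

lemma C4_ar:
  assumes "i + 2 \<le> j"
  shows "shift j u = i \<longleftrightarrow> u = i" "shift j u = Suc i \<longleftrightarrow> u = Suc i"
    "u \<noteq> i \<Longrightarrow> u \<noteq> Suc i \<Longrightarrow> unshift i (shift j u) = shift (j-2) (unshift i u)"
    "unshift i j = j - 2" "unshift i (Suc j) = Suc (j - 2)" "j \<noteq> i" "j \<noteq> Suc i" "Suc j \<noteq> i" "Suc j \<noteq> Suc i"
  using assms by (auto simp: shift_def unshift_def)

lemma C4: assumes "i + 2 \<le> j"
  shows "cap j (l i z) = l i (cap (j-2) z)"
    and "(j, Suc j) \<in> l i z \<longleftrightarrow> (j-2, Suc (j-2)) \<in> z"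
proof -
  note ar = C4_ar[OF assms]
  show "(j, Suc j) \<in> l i z \<longleftrightarrow> (j-2, Suc (j-2)) \<in> z"
    by (simp add: mem_l ar)
  show "cap j (l i z) = l i (cap (j-2) z)"
  proof (rule set_eqI, clarify)
    fix u v
    show "(u,v) \<in> cap j (l i z) \<longleftrightarrow> (u,v) \<in> l i (cap (j-2) z)"
    proof (cases "u \<in> {i, Suc i} \<or> v \<in> {i, Suc i}")
      case True
      then show ?thesis unfolding mem_cap mem_l by (auto simp: ar)
    next
      case False
      then show ?thesis unfolding mem_cap mem_l by (simp add: ar)
    qed
  qed
qed

lemma C5_ar:
  assumes "j + 2 \<le> i"
  shows "shift j u = i \<longleftrightarrow> u = i - 2" "shift j u = Suc i \<longleftrightarrow> u = Suc (i - 2)"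
    "u \<noteq> i - 2 \<Longrightarrow> u \<noteq> Suc (i - 2) \<Longrightarrow> unshift i (shift j u) = shift j (unshift (i-2) u)"
    "unshift i j = j" "unshift i (Suc j) = Suc j" "j \<noteq> i" "j \<noteq> Suc i" "Suc j \<noteq> i" "Suc j \<noteq> Suc i"
  using assms by (auto simp: shift_def unshift_def)

lemma C5: assumes "j + 2 \<le> i"
  shows "cap j (l i z) = l (i-2) (cap j z)"
    and "(j, Suc j) \<in> l i z \<longleftrightarrow> (j, Suc j) \<in> z"
proof -
  note ar = C5_ar[OF assms]
  show "(j, Suc j) \<in> l i z \<longleftrightarrow> (j, Suc j) \<in> z"
    by (simp add: mem_l ar)
  show "cap j (l i z) = l (i-2) (cap j z)"
  proof (rule set_eqI, clarify)
    fix u v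
    show "(u,v) \<in> cap j (l i z) \<longleftrightarrow> (u,v) \<in> l (i-2) (cap j z)"
    proof (cases "u \<in> {i-2, Suc (i-2)} \<or> v \<in> {i-2, Suc (i-2)}")
      case True
      then show ?thesis unfolding mem_cap mem_l using assms by (auto simp: ar)
    next
      case False
      then show ?thesis unfolding mem_cap mem_l by (simp add: ar)
    qed
  qed
qed



lemma C2_ar:
  shows "shift (Suc j) u = j \<longleftrightarrow> u = j" "shift (Suc j) u \<noteq> Suc j"
    "u \<noteq> j \<Longrightarrow> unshift j (shift (Suc j) u) = u"
    "unshift j (Suc (Suc j)) = j"
  by (auto simp: shift_def unshift_def)

lemma C2: assumes z: "z \<in> D n"
  shows "cap (Suc j) (l j z) = z" and "(Suc j, Suc (Suc j)) \<notin> l j z"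
proof -
  show "(Suc j, Suc (Suc j)) \<notin> l j z" by (simp add: mem_l)
  show "cap (Suc j) (l j z) = z"
  proof (rule set_eqI, clarify)
    fix u v
    show "(u,v) \<in> cap (Suc j) (l j z) \<longleftrightarrow> (u,v) \<in> z"
    proof (cases "u = j \<or> v = j")
      case True
      then show ?thesis unfolding mem_cap mem_l using D_sym[OF z] D_irr[OF z] by (auto simp: C2_ar)
    next
      case False
      then show ?thesis unfolding mem_cap mem_l by (simp add: C2_ar)
    qed
  qed
qed

lemma C3_ar:
  shows "shift j u = Suc (Suc j) \<longleftrightarrow> u = j" "shift j u \<noteq> Suc j"
    "unshift (Suc j) (shift j u) = u"
    "unshift (Suc j) j = j"
  by (auto simp: shift_def unshift_def)

lemma C3: assumes z: "z \<in> D n"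
  shows "cap j (l (Suc j) z) = z" and "(j, Suc j) \<notin> l (Suc j) z"
proof -
  show "(j, Suc j) \<notin> l (Suc j) z" by (simp add: mem_l)
  show "cap j (l (Suc j) z) = z"
  proof (rule set_eqI, clarify)
    fix u v
    show "(u,v) \<in> cap j (l (Suc j) z) \<longleftrightarrow> (u,v) \<in> z"
    proof (cases "u = j \<or> v = j")
      case True
      then show ?thesis unfolding mem_cap mem_l using D_sym[OF z] D_irr[OF z] by (auto simp: C3_ar)
    next
      case False
      then show ?thesis unfolding mem_cap mem_l by (simp add: C3_ar)
    qed
  qed
qed



lemma nc_in:
  assumes z: "z \<in> D n" and ppqq: "(pp,qq) \<in> z" and cd: "(c,d) \<in> z" and "c < d"
    and "pp \<noteq> c" "pp \<noteq> d" "qq \<noteq> c" "qq \<noteq> d"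
  shows "(c < pp \<and> pp < d) \<longleftrightarrow> (c < qq \<and> qq < d)"
proof -
  have qqpp: "(qq,pp) \<in> z" using D_sym[OF z ppqq] .
  have 1: False if o1: "c < pp" "pp < d" "\<not> (c < qq \<and> qq < d)"
    and h: "(pp,qq) \<in> z" "(qq,pp) \<in> z" "qq \<noteq> c" "qq \<noteq> d" for pp qq
  proof -
    have "qq < c \<or> d < qq" using that by linarith
    then show False
    proof
      assume "qq < c" then show False using D_nc[OF z h(2) cd] that by simp
    next
      assume "d < qq" then show False using D_nc[OF z cd h(1)] that by simp
    qed
  qed
  show ?thesis using 1[of pp qq] 1[of qq pp] ppqq qqpp assms(5-8) by blast
qed

lemma cap_D:
  assumes z: "z \<in> D (Suc n)" and j: "1 \<le> j" "j \<le> 2*n+1"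
  shows "cap j z \<in> D n"
proof -
  obtain x where x: "(j,x) \<in> z" using D_ex[OF z, of j] j by auto
  obtain y where y: "(Suc j, y) \<in> z" using D_ex[OF z, of "Suc j"] j by auto
  have pj: "(j,w) \<in> z \<longleftrightarrow> w = x" "(w,j) \<in> z \<longleftrightarrow> w = x" "(Suc j,w) \<in> z \<longleftrightarrow> w = y"
     "(w,Suc j) \<in> z \<longleftrightarrow> w = y" for w
    using D_uniq[OF z] D_sym[OF z] x y by blast+
  have px: "(x,w) \<in> z \<longleftrightarrow> w = j" "(y,w) \<in> z \<longleftrightarrow> w = Suc j" for w
    using D_uniq[OF z] D_sym[OF z] x y by blast+
  show ?thesis
  proof (cases "x = Suc j")
    case True
    have "cap j z = remove_arc j z"
    proof (rule set_eqI, clarify)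
      fix u v
      show "(u,v) \<in> cap j z \<longleftrightarrow> (u,v) \<in> remove_arc j z"
        unfolding mem_cap mem_remove pj using True shift_ne by auto
    qed
    then show ?thesis using remove_D(1)[OF z] True x by simp
  next
    case False
    have xj: "x \<noteq> j" using D_irr[OF z x] by simp
    have yj: "y \<noteq> j" "y \<noteq> Suc j"
    proof -
      show "y \<noteq> j"
      proof
        assume "y = j"
        then have "(Suc j, j) \<in> z" using y by simp
        then have "Suc j = x" using pj(2) by blast
        then show False using False by simp
      qed
      show "y \<noteq> Suc j" using D_irr[OF z y] by simp
    qed
    have xy: "x \<noteq> y" using px xj by (metis n_not_Suc_n y pj(4))
    define z' where "z' = {p \<in> z. fst p \<notin> {j, Suc j} \<and> snd p \<notin> {j, Suc j}} \<union> {(j,Suc j),(Suc j,j),(x,y),(y,x)}"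
    have mz': "(u,v) \<in> z' \<longleftrightarrow> ((u,v) \<in> z \<and> u \<noteq> j \<and> u \<noteq> Suc j \<and> v \<noteq> j \<and> v \<noteq> Suc j) \<or>
        (u = j \<and> v = Suc j) \<or> (u = Suc j \<and> v = j) \<or> (u = x \<and> v = y) \<or> (u = y \<and> v = x)" for u v
      unfolding z'_def by auto
    have capeq: "cap j z = remove_arc j z'"
    proof (rule set_eqI, clarify)
      fix u v
      show "(u,v) \<in> cap j z \<longleftrightarrow> (u,v) \<in> remove_arc j z'"
        unfolding mem_cap mem_remove mz' pj using shift_ne by auto
    qed
    have old: "u \<noteq> x \<and> u \<noteq> y" if "(u,v) \<in> z" "u \<noteq> j" "u \<noteq> Suc j" "v \<noteq> j" "v \<noteq> Suc j" for u v
      using that px by auto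
    have z'D: "z' \<in> D (Suc n)"
    proof (rule D_intro)
      fix u v assume "(u,v) \<in> z'"
      then show "1 \<le> u \<and> u \<le> 2*Suc n \<and> 1 \<le> v \<and> v \<le> 2*Suc n"
        unfolding mz' using D_bound[OF z] x y j by auto
    next
      fix u v assume "(u,v) \<in> z'" then show "(v,u) \<in> z'" unfolding mz' using D_sym[OF z] by auto
    next
      fix u show "(u,u) \<notin> z'" unfolding mz' using D_irr[OF z] xy by auto
    next
      fix u v w assume "(u,v) \<in> z'" "(u,w) \<in> z'"
      then show "v = w" unfolding mz' using D_uniq[OF z] old xj yj xy False by metis
    next
      fix u assume u: "1 \<le> u" "u \<le> 2 * Suc n"
      show "\<exists>v. (u,v) \<in> z'"
      proof (cases "u = j \<or> u = Suc j \<or> u = x \<or> u = y")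
        case True then show ?thesis unfolding mz' by blast
      next
        case False
        then obtain w where w: "(u,w) \<in> z" using D_ex[OF z u] by blast
        have "w \<noteq> j" "w \<noteq> Suc j" using w pj False by auto
        then show ?thesis using w False unfolding mz' by blast
      qed
    next
      fix a b c d assume ab: "(a,b) \<in> z'" and cd: "(c,d) \<in> z'" and o: "a < c" "c < b" "b < d"
      have xyin: "(c' < x \<and> x < d') \<longleftrightarrow> (c' < y \<and> y < d')"
        if "(c',d') \<in> z" "c' < d'" "c' \<noteq> j" "c' \<noteq> Suc j" "d' \<noteq> j" "d' \<noteq> Suc j" for c' d'
      proof -
        have n1: "c' \<noteq> x" "d' \<noteq> x" "c' \<noteq> y" "d' \<noteq> y" using old[of c' d'] old[of d' c'] D_sym[OF z] that by auto
        have "(c' < x \<and> x < d') \<longleftrightarrow> (c' < j \<and> j < d')"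
          using nc_in[OF z D_sym[OF z x] that(1,2)] n1 that by auto
        also have "\<dots> \<longleftrightarrow> (c' < Suc j \<and> Suc j < d')" using that by auto
        also have "\<dots> \<longleftrightarrow> (c' < y \<and> y < d')"
          using nc_in[OF z y that(1,2)] n1 that by auto
        finally show ?thesis .
      qed
      consider "(a,b) \<in> z" "a \<noteq> j" "a \<noteq> Suc j" "b \<noteq> j" "b \<noteq> Suc j" | "a = j \<and> b = Suc j" | "a = Suc j \<and> b = j"
        | "a = x \<and> b = y \<or> a = y \<and> b = x" using ab unfolding mz' by blast
      then show False
      proof cases
        case 1
        note A = this
        consider "(c,d) \<in> z" "c \<noteq> j" "c \<noteq> Suc j" "d \<noteq> j" "d \<noteq> Suc j" | "c = j \<and> d = Suc j" | "c = Suc j \<and> d = j"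
          | "c = x \<and> d = y \<or> c = y \<and> d = x" using cd unfolding mz' by blast
        then show False
        proof cases
          case 1
          then show False using D_nc[OF z A(1) 1(1)] o by simp
        next
          case 4
          then show False using xyin[of a b] A o by auto
        qed (use o in auto)
      next
        case 4
        consider "(c,d) \<in> z" "c \<noteq> j" "c \<noteq> Suc j" "d \<noteq> j" "d \<noteq> Suc j" | "c = j \<and> d = Suc j" | "c = Suc j \<and> d = j"
          | "c = x \<and> d = y \<or> c = y \<and> d = x" using cd unfolding mz' by blast
        then show False
        proof cases
          case 1
          then show False using xyin[of c d] 4 o by auto
        qed (use o 4 in auto)
      qed (use o in auto)
    qed
    have "(j, Suc j) \<in> z'" unfolding mz' by simp
    then show ?thesis using remove_D(1)[OF z'D] capeq by simp
  qed
qed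



lemma card_kernel:
  assumes "\<And>a b. a \<in> A \<Longrightarrow> b \<in> A \<Longrightarrow> f a = f b \<longleftrightarrow> g a = g b"
  shows "card (f ` A) = card (g ` A)"
proof -
  define P where "P = (\<lambda>a. (f a, g a)) ` A"
  have "inj_on fst P" unfolding P_def inj_on_def using assms by auto
  moreover have "inj_on snd P" unfolding P_def inj_on_def using assms by auto
  moreover have "fst ` P = f ` A" "snd ` P = g ` A" unfolding P_def by force+
  ultimately show ?thesis by (metis card_image)
qed

lemma rtrancl_sym: "sym R \<Longrightarrow> (a,b) \<in> R\<^sup>* \<Longrightarrow> (b,a) \<in> R\<^sup>*"
  using sym_rtrancl[of R] unfolding sym_def by blast

lemma loops_kernel:
  assumes "sym (M \<union> N)"
    and "\<And>a b. a \<in> {1..2*n} \<Longrightarrow> b \<in> {1..2*n} \<Longrightarrow> F a = F b \<longleftrightarrow> (a,b) \<in> (M \<union> N)\<^sup>*"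
  shows "loops n M N = card (F ` {1..2*n})"
proof -
  define A where "A = {1..2*n}"
  define R where "R = M \<union> N"
  define E where "E = R\<^sup>* \<inter> (A \<times> A)"
  have q: "A // E = (\<lambda>a. E``{a}) ` A" unfolding quotient_def by auto
  have k: "E``{a} = E``{b} \<longleftrightarrow> (a,b) \<in> R\<^sup>*" if "a \<in> A" "b \<in> A" for a b
  proof
    assume "E``{a} = E``{b}"
    moreover have "b \<in> E``{b}" using that unfolding E_def by auto
    ultimately show "(a,b) \<in> R\<^sup>*" unfolding E_def by auto
  next
    assume h: "(a,b) \<in> R\<^sup>*"
    have h': "(b,a) \<in> R\<^sup>*" using rtrancl_sym[OF assms(1)[folded R_def] h] .
    show "E``{a} = E``{b}" unfolding E_def using h h' that
      by (auto intro: rtrancl_trans)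
  qed
  have "loops n M N = card (A // E)"
    unfolding loops_def A_def E_def R_def by simp
  also have "\<dots> = card ((\<lambda>a. E``{a}) ` A)" using q by simp
  also have "\<dots> = card (F ` A)"
    by (rule card_kernel) (use k assms(2) in \<open>auto simp: A_def R_def\<close>)
  finally show ?thesis unfolding A_def .
qed



lemma D_symR: "M \<in> D n \<Longrightarrow> sym M"
  unfolding sym_def using D_sym by blast

lemma LL:
  assumes z: "z \<in> D (Suc n)" and N: "N \<in> D n" and j: "1 \<le> j" "j \<le> 2*n+1"
  shows "loops (Suc n) z (l j N) = loops n (cap j z) N + (if (j, Suc j) \<in> z then 1 else 0)"
proof -
  define G where "G = z \<union> l j N"
  define G' where "G' = cap j z \<union> N"
  define A where "A = {1..2 * Suc n}"
  define B where "B = {1..2*n}"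
  have lN: "l j N \<in> D (Suc n)" using l_D[OF N j] .
  have cz: "cap j z \<in> D n" using cap_D[OF z j] .
  have symG: "sym G" unfolding G_def using D_symR[OF z] D_symR[OF lN] by (simp add: sym_Un)
  have symG': "sym G'" unfolding G'_def using D_symR[OF cz] D_symR[OF N] by (simp add: sym_Un)
  define C where "C = (\<lambda>b. G'\<^sup>* `` {b})"
  have Ck: "C a = C b \<longleftrightarrow> (a,b) \<in> G'\<^sup>*" for a b
  proof
    assume "C a = C b"
    then have "b \<in> C a" unfolding C_def by auto
    then show "(a,b) \<in> G'\<^sup>*" unfolding C_def by auto
  next
    assume h: "(a,b) \<in> G'\<^sup>*"
    then have "(b,a) \<in> G'\<^sup>*" using rtrancl_sym[OF symG'] by blast
    then show "C a = C b" unfolding C_def using h by (auto intro: rtrancl_trans)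
  qed
  have loopsB: "loops n (cap j z) N = card (C ` B)"
    unfolding B_def by (rule loops_kernel) (use symG' Ck in \<open>auto simp: G'_def\<close>)
  have BW: "(shift j p, shift j p') \<in> G\<^sup>*" if "(p,p') \<in> G'\<^sup>*" for p p'
    using that
  proof (induction rule: rtrancl_induct)
    case base then show ?case by simp
  next
    case (step b c)
    have "(shift j b, shift j c) \<in> G\<^sup>*"
    proof -
      consider "(b,c) \<in> N" | "(shift j b, shift j c) \<in> z"
        | "(j, shift j b) \<in> z \<and> (Suc j, shift j c) \<in> z" | "(j, shift j c) \<in> z \<and> (Suc j, shift j b) \<in> z"
        using step(2) unfolding G'_def Un_iff mem_cap by blast
      then show ?thesis
      proof cases
        case 1
        then have "(shift j b, shift j c) \<in> l j N" by (simp add: mem_l shift_ne)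
        then show ?thesis unfolding G_def by blast
      next
        case 2 then show ?thesis unfolding G_def by blast
      next
        case 3
        have "(shift j b, j) \<in> G" using 3 D_sym[OF z] unfolding G_def by blast
        moreover have "(j, Suc j) \<in> G" unfolding G_def by (simp add: mem_l)
        moreover have "(Suc j, shift j c) \<in> G" using 3 unfolding G_def by blast
        ultimately show ?thesis by (meson converse_rtrancl_into_rtrancl r_into_rtrancl)
      next
        case 4
        have "(shift j b, Suc j) \<in> G" using 4 D_sym[OF z] unfolding G_def by blast
        moreover have "(Suc j, j) \<in> G" unfolding G_def by (simp add: mem_l)
        moreover have "(j, shift j c) \<in> G" using 4 unfolding G_def by blast
        ultimately show ?thesis by (meson converse_rtrancl_into_rtrancl r_into_rtrancl)
      qed
    qed
    then show ?case using step(3) by (rule rtrancl_trans[rotated])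
  qed
  have FW0: "(unshift j w, unshift j w') \<in> G'" if "(w,w') \<in> G" "w \<noteq> j" "w \<noteq> Suc j" "w' \<noteq> j" "w' \<noteq> Suc j" for w w'
  proof -
    have "(w,w') \<in> z \<or> (w,w') \<in> l j N" using that(1) unfolding G_def by blast
    then show ?thesis
    proof
      assume "(w,w') \<in> z"
      then have "(shift j (unshift j w), shift j (unshift j w')) \<in> z" using that by (simp add: shift_unshift)
      then show ?thesis unfolding G'_def Un_iff mem_cap by blast
    next
      assume "(w,w') \<in> l j N" then show ?thesis using that unfolding G'_def Un_iff mem_l by blast
    qed
  qed
  have unsB: "unshift j w \<in> B" if "w \<in> A" "w \<noteq> j" "w \<noteq> Suc j" for w
    using that j unfolding A_def B_def by (auto simp: unshift_def)
  have shA: "shift j b \<in> A" if "b \<in> B" for b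
    using that j unfolding A_def B_def by (auto simp: shift_def)
  have jA: "j \<in> A" "Suc j \<in> A" using j unfolding A_def by auto
  have GA: "(w,w') \<in> G \<Longrightarrow> w \<in> A \<and> w' \<in> A" for w w'
    unfolding G_def A_def using D_bound[OF z] D_bound[OF lN] by auto
  show ?thesis
  proof (cases "(j, Suc j) \<in> z")
    case True
    have closed: "b \<in> {j, Suc j}" if "(a,b) \<in> G\<^sup>*" "a \<in> {j, Suc j}" for a b
      using that
    proof (induction rule: rtrancl_induct)
      case base then show ?case by simp
    next
      case (step b c)
      have "b \<in> {j, Suc j}" using step by simp
      moreover have "(j,w) \<in> z \<Longrightarrow> w = Suc j" "(Suc j,w) \<in> z \<Longrightarrow> w = j" for w
        using D_uniq[OF z] True D_sym[OF z True] by blast+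
      ultimately show ?case using step(2) unfolding G_def Un_iff mem_l by auto
    qed
    have out: "b \<notin> {j, Suc j}" if "(a,b) \<in> G\<^sup>*" "a \<notin> {j, Suc j}" for a b
      using closed[of b a] rtrancl_sym[OF symG that(1)] that(2) by blast
    have fw: "(unshift j a, unshift j b) \<in> G'\<^sup>*" if "(a,b) \<in> G\<^sup>*" "a \<notin> {j, Suc j}" for a b
      using that
    proof (induction rule: rtrancl_induct)
      case base then show ?case by simp
    next
      case (step b c)
      have "b \<notin> {j, Suc j}" "c \<notin> {j, Suc j}" using out step by (blast intro: rtrancl_into_rtrancl)+
      then have "(unshift j b, unshift j c) \<in> G'" using FW0 step(2) by blast
      then show ?case using step by (meson rtrancl.rtrancl_into_rtrancl)
    qed
    define F where "F = (\<lambda>a. if a \<in> {j, Suc j} then None else Some (C (unshift j a)))"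
    have Fk: "F a = F b \<longleftrightarrow> (a,b) \<in> G\<^sup>*" if "a \<in> A" "b \<in> A" for a b
    proof (cases "a \<in> {j, Suc j}"; cases "b \<in> {j, Suc j}")
      assume "a \<in> {j, Suc j}" "b \<in> {j, Suc j}"
      moreover have "(j, Suc j) \<in> G" "(Suc j, j) \<in> G" unfolding G_def by (auto simp: mem_l)
      ultimately show ?thesis unfolding F_def by auto
    next
      assume "a \<in> {j, Suc j}" "b \<notin> {j, Suc j}"
      then show ?thesis unfolding F_def using closed by auto
    next
      assume "a \<notin> {j, Suc j}" "b \<in> {j, Suc j}"
      then show ?thesis unfolding F_def using out by auto
    next
      assume ab: "a \<notin> {j, Suc j}" "b \<notin> {j, Suc j}"
      have "F a = F b \<longleftrightarrow> (unshift j a, unshift j b) \<in> G'\<^sup>*" unfolding F_def using ab Ck by simp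
      also have "\<dots> \<longleftrightarrow> (a,b) \<in> G\<^sup>*"
        using fw[of a b] ab BW[of "unshift j a" "unshift j b"] by (auto simp: shift_unshift)
      finally show ?thesis .
    qed
    have "loops (Suc n) z (l j N) = card (F ` A)"
      unfolding A_def by (rule loops_kernel) (use symG Fk in \<open>auto simp: G_def A_def\<close>)
    also have "F ` A = insert None (Some ` C ` B)"
    proof
      show "F ` A \<subseteq> insert None (Some ` C ` B)" unfolding F_def using unsB by auto
      show "insert None (Some ` C ` B) \<subseteq> F ` A"
      proof
        fix X assume "X \<in> insert None (Some ` C ` B)"
        then consider "X = None" | b where "b \<in> B" "X = Some (C b)" by auto
        then show "X \<in> F ` A"
        proof cases
          case 1 then show ?thesis unfolding F_def using jA by (auto intro!: image_eqI[of _ _ j])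
        next
          case 2 then show ?thesis unfolding F_def using shA[OF 2(1)] shift_ne
            by (auto intro!: image_eqI[of _ _ "shift j b"])
        qed
      qed
    qed
    also have "card (insert None (Some ` C ` B)) = card (C ` B) + 1"
    proof -
      have "finite (Some ` C ` B)" unfolding B_def by simp
      moreover have "None \<notin> Some ` C ` B" by auto
      ultimately show ?thesis by (simp add: card_image)
    qed
    finally show ?thesis using True loopsB by simp
  next
    case False
    obtain x where x: "(j,x) \<in> z" using D_ex[OF z, of j] j by auto
    obtain y where y: "(Suc j, y) \<in> z" using D_ex[OF z, of "Suc j"] j by auto
    have pj: "(j,w) \<in> z \<longleftrightarrow> w = x" "(w,j) \<in> z \<longleftrightarrow> w = x" "(Suc j,w) \<in> z \<longleftrightarrow> w = y"
      "(w,Suc j) \<in> z \<longleftrightarrow> w = y" for w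
      using D_uniq[OF z] D_sym[OF z] x y by blast+
    have xj: "x \<noteq> j" "x \<noteq> Suc j" using D_irr[OF z x] False x by auto
    have yj: "y \<noteq> j" "y \<noteq> Suc j" using D_irr[OF z y] False D_sym[OF z y] by auto
    define \<rho> where "\<rho> = (\<lambda>w. if w = j then unshift j x else if w = Suc j then unshift j y else unshift j w)"
    have capxy: "(unshift j x, unshift j y) \<in> G'" "(unshift j y, unshift j x) \<in> G'"
      unfolding G'_def Un_iff mem_cap using x y xj yj by (auto simp: shift_unshift)
    have fw1: "(\<rho> w, \<rho> w') \<in> G'\<^sup>*" if "(w,w') \<in> G" for w w'
    proof (cases "w \<in> {j, Suc j} \<or> w' \<in> {j, Suc j}")
      case False
      then show ?thesis using FW0[OF that] unfolding \<rho>_def by auto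
    next
      case True
      have "(w,w') \<in> z \<or> (w,w') \<in> l j N" using that unfolding G_def by blast
      then show ?thesis
      proof
        assume wz: "(w,w') \<in> z"
        have "\<rho> w = \<rho> w'" using True wz pj xj yj unfolding \<rho>_def by auto
        then show ?thesis by simp
      next
        assume "(w,w') \<in> l j N"
        then have "(w = j \<and> w' = Suc j) \<or> (w = Suc j \<and> w' = j)" using True unfolding mem_l by auto
        then show ?thesis using capxy unfolding \<rho>_def by auto
      qed
    qed
    have fw: "(\<rho> a, \<rho> b) \<in> G'\<^sup>*" if "(a,b) \<in> G\<^sup>*" for a b
      using that
    proof (induction rule: rtrancl_induct)
      case base then show ?case by simp
    next
      case (step b c) then show ?case using fw1 by (blast intro: rtrancl_trans)
    qed
    have bk: "(a, shift j (\<rho> a)) \<in> G\<^sup>*" for a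
    proof -
      have "a = j \<Longrightarrow> (a, shift j (\<rho> a)) \<in> G" unfolding \<rho>_def G_def using x xj by (simp add: shift_unshift)
      moreover have "a = Suc j \<Longrightarrow> (a, shift j (\<rho> a)) \<in> G" unfolding \<rho>_def G_def using y yj by (simp add: shift_unshift)
      moreover have "a \<noteq> j \<Longrightarrow> a \<noteq> Suc j \<Longrightarrow> shift j (\<rho> a) = a" unfolding \<rho>_def by (simp add: shift_unshift)
      ultimately show ?thesis by (metis r_into_rtrancl rtrancl.rtrancl_refl)
    qed
    define F where "F = (\<lambda>a. C (\<rho> a))"
    have Fk: "F a = F b \<longleftrightarrow> (a,b) \<in> G\<^sup>*" for a b
    proof
      assume "F a = F b"
      then have "(\<rho> a, \<rho> b) \<in> G'\<^sup>*" unfolding F_def Ck .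
      then have "(shift j (\<rho> a), shift j (\<rho> b)) \<in> G\<^sup>*" by (rule BW)
      moreover have "(shift j (\<rho> b), b) \<in> G\<^sup>*" using rtrancl_sym[OF symG bk[of b]] .
      ultimately show "(a,b) \<in> G\<^sup>*" using bk[of a] by (blast intro: rtrancl_trans)
    next
      assume "(a,b) \<in> G\<^sup>*" then show "F a = F b" unfolding F_def Ck by (rule fw)
    qed
    have "loops (Suc n) z (l j N) = card (F ` A)"
      unfolding A_def by (rule loops_kernel) (use symG Fk in \<open>auto simp: G_def\<close>)
    also have "F ` A = C ` B"
    proof -
      have xA: "x \<in> A" "y \<in> A" using GA[of j x] GA[of "Suc j" y] x y unfolding G_def by auto
      have "\<rho> ` A = B"
      proof
        show "\<rho> ` A \<subseteq> B" unfolding \<rho>_def using unsB xA xj yj by auto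
        show "B \<subseteq> \<rho> ` A"
        proof
          fix b assume "b \<in> B"
          then have "\<rho> (shift j b) = b" "shift j b \<in> A" using shA shift_ne unfolding \<rho>_def by auto
          then show "b \<in> \<rho> ` A" by (metis image_eqI)
        qed
      qed
      then show ?thesis unfolding F_def by (simp add: image_image[symmetric])
    qed
    finally show ?thesis using False loopsB by simp
  qed
qed



lemma markov_basis:
  assumes "y \<in> D n"
  shows "markov n (basis y) v = (\<Sum>N\<in>D n. v N * q ^ loops n y N)"
proof -
  have "markov n (basis y) v = (\<Sum>M\<in>D n. if M = y then (\<Sum>N\<in>D n. v N * q ^ loops n M N) else 0)"
    unfolding markov_def basis_def by (intro sum.cong) (auto simp: sum_distrib_left)
  also have "\<dots> = (\<Sum>N\<in>D n. v N * q ^ loops n y N)"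
    using assms D_finite by (simp add: sum.delta)
  finally show ?thesis .
qed

lemma markov_diff:
  "markov n u (\<lambda>N. v N - c * w N) = markov n u v - c * markov n u w"
  unfolding markov_def by (simp add: algebra_simps sum_subtractf sum_distrib_left)

lemma lin_l_l: "lin_l j x (l j N) = x N"
proof -
  have "{M. l j M = l j N} = {N}" using l_inj by blast
  then show ?thesis unfolding lin_l_def by simp
qed

lemma lin_l_out: "N' \<notin> range (l j) \<Longrightarrow> lin_l j x N' = 0"
proof -
  assume "N' \<notin> range (l j)"
  then have "{M. l j M = N'} = {}" by auto
  then show ?thesis unfolding lin_l_def by simp
qed

lemma ADJ:
  assumes z: "z \<in> D (Suc n)" and j: "1 \<le> j" "j \<le> 2*n+1"
  shows "markov (Suc n) (basis z) (lin_l j x) =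
    (if (j, Suc j) \<in> z then q else 1) * markov n (basis (cap j z)) x"
proof -
  have sub: "l j ` D n \<subseteq> D (Suc n)" using l_D j by blast
  have "markov (Suc n) (basis z) (lin_l j x) = (\<Sum>N'\<in>D (Suc n). lin_l j x N' * q ^ loops (Suc n) z N')"
    by (rule markov_basis[OF z])
  also have "\<dots> = (\<Sum>N'\<in>l j ` D n. lin_l j x N' * q ^ loops (Suc n) z N')"
  proof (rule sum.mono_neutral_right[OF D_finite sub])
    show "\<forall>i\<in>D (Suc n) - l j ` D n. lin_l j x i * q ^ loops (Suc n) z i = 0"
    proof
      fix N' assume h: "N' \<in> D (Suc n) - l j ` D n"
      have "N' \<notin> range (l j)"
      proof
        assume "N' \<in> range (l j)"
        then obtain M where M: "N' = l j M" by auto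
        then have "(j, Suc j) \<in> N'" by (simp add: mem_l)
        then have "remove_arc j N' \<in> D n" using remove_D(1) h by blast
        then have "M \<in> D n" using M by simp
        then show False using h M by auto
      qed
      then show "lin_l j x N' * q ^ loops (Suc n) z N' = 0" by (simp add: lin_l_out)
    qed
  qed
  also have "\<dots> = (\<Sum>N\<in>D n. x N * q ^ loops (Suc n) z (l j N))"
    by (subst sum.reindex) (auto simp: inj_on_def l_inj lin_l_l)
  also have "\<dots> = (\<Sum>N\<in>D n. (if (j, Suc j) \<in> z then q else 1) * (x N * q ^ loops n (cap j z) N))"
    by (intro sum.cong refl) (simp add: LL[OF z _ j] power_add)
  also have "\<dots> = (if (j, Suc j) \<in> z then q else 1) * markov n (basis (cap j z)) x"
    by (simp add: markov_basis[OF cap_D[OF z j]] sum_distrib_left)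
  finally show ?thesis .
qed



fun Pd :: "nat \<Rightarrow> rat poly" where
  "Pd 0 = 1"
| "Pd (Suc 0) = [:0, 1:]"
| "Pd (Suc (Suc k)) = [:0, 1:] * Pd (Suc k) - Pd k"

lemma Pd_degree: "degree (Pd k) = k \<and> Pd k \<noteq> 0"
proof (induction k rule: Pd.induct)
  case 1 then show ?case by simp
next
  case 2 then show ?case by simp
next
  case (3 k)
  have m: "[:0, 1:] * Pd (Suc k) = pCons 0 (Pd (Suc k))" by simp
  have d1: "degree (pCons 0 (Pd (Suc k))) = Suc (Suc k)" using 3 by simp
  have "degree (pCons 0 (Pd (Suc k)) + - Pd k) = Suc (Suc k)"
    using degree_add_eq_left[of "- Pd k" "pCons 0 (Pd (Suc k))"] d1 3 by simp
  then have "degree (Pd (Suc (Suc k))) = Suc (Suc k)" using m by simp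
  then show ?case by auto
qed

lemma Delta_Pd: "Delta k = Fract (Pd k) 1"
proof (induction k rule: Pd.induct)
  case 1 then show ?case by (simp add: One_fract_def)
next
  case 2 then show ?case by (simp add: q_def)
next
  case (3 k)
  then show ?case by (simp add: q_def)
qed

lemma Delta_nz: "Delta k \<noteq> 0"
proof
  assume "Delta k = 0"
  then have "Fract (Pd k) 1 = Fract 0 1" by (simp add: Delta_Pd Zero_fract_def)
  then have "Pd k = 0" by (simp add: eq_fract)
  then show False using Pd_degree[of k] by simp
qed

lemma Delta_rec: "2 \<le> b \<Longrightarrow> Delta b = q * Delta (b-1) - Delta (b-2)"
proof -
  assume "2 \<le> b"
  then obtain k where "b = Suc (Suc k)" by (metis add_2_eq_Suc le_Suc_ex)
  then show ?thesis by simp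
qed

lemma e_one: "e [1] = l 1 {}"
proof -
  have LD: "l 1 {} \<in> D 1" using l_D[of "{}" 0 1] by (simp add: D0)
  have "(LEAST k. (k, Suc k) \<in> l 1 {}) = 1"
    by (rule Least_equality) (auto simp: mem_l)
  then have rs: "rseq 1 (l 1 {}) = [1]" by (simp add: rseq_Suc[of 0, simplified])
  then have r1: "restricted 1 [1]" unfolding restricted_def using LD by blast
  show ?thesis using rseq_inj[OF restricted_e(1)[OF r1] LD] restricted_e(2)[OF r1] rs by simp
qed

lemma lin_l_basis_empty: "lin_l 1 (basis {}) = basis (l 1 {})"
proof
  fix N
  show "lin_l 1 (basis {}) N = basis (l 1 {}) N"
  proof (cases "N \<in> range (l 1)")
    case True
    then obtain M where "N = l 1 M" by auto
    then show ?thesis by (auto simp: lin_l_l basis_def dest: l_inj)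
  next
    case False then show ?thesis by (auto simp: lin_l_out basis_def)
  qed
qed



lemma restricted_hd:
  assumes "restricted m s" "s \<noteq> []"
  shows "1 \<le> hd s" "Suc (hd s) \<le> 2*m" "1 \<le> m"
proof -
  obtain m' where m': "m = Suc m'" using assms restricted_e(3)[OF assms(1)] by (cases m) auto
  obtain k s' where "s = k # s'" "1 \<le> k" "k \<le> 2*m'+1"
    using restricted_cons[OF assms(1)[unfolded m']] by metis
  then show "1 \<le> hd s" "Suc (hd s) \<le> 2*m" "1 \<le> m" using m' by auto
qed

context
  fixes m :: nat and \<alpha>' :: "nat list" and T :: nat
  assumes r\<alpha>': "restricted m \<alpha>'"
    and IHP0: "\<forall>i z. \<alpha>' \<noteq> [] \<longrightarrow> 1 \<le> i \<longrightarrow> i < hd \<alpha>' \<longrightarrow> z \<in> D (m-1) \<longrightarrow> markov m (basis (l i z)) (e' \<alpha>') = 0"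
    and T_def: "T = (if \<alpha>' = [] then 1 else Suc (hd \<alpha>'))"
begin

lemmas IHP = IHP0[rule_format]

lemma T_le: "T \<le> 2*m+1" and T_ge3: "3 \<le> T \<Longrightarrow> \<alpha>' \<noteq> [] \<and> 1 \<le> m \<and> T \<le> 2*m"
  using restricted_hd[OF r\<alpha>'] T_def by (auto split: if_splits)

lemma ERec:
  assumes "1 \<le> b" "b \<le> T"
  shows "e' (b # \<alpha>') = (if 2 \<le> b then (\<lambda>N. lin_l b (e' \<alpha>') N - (Delta (b-2) / Delta (b-1)) * e' ((b-1) # \<alpha>') N)
     else lin_l 1 (e' \<alpha>'))"
proof (cases \<alpha>')
  case Nil
  then have "b = 1" using assms T_def by simp
  have "e' [1] = lin_l 1 (e' [])" by (simp only: e'.simps e_one lin_l_basis_empty)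
  then show ?thesis using Nil \<open>b = 1\<close> by simp
next
  case (Cons c rest)
  then show ?thesis using assms by (cases "2 \<le> b") auto
qed

lemma ARec:
  assumes b: "1 \<le> b" "b \<le> T" and z: "z \<in> D m" and i: "1 \<le> i" "i \<le> 2*m+1"
  shows "markov (Suc m) (basis (l i z)) (e' (b # \<alpha>')) =
    (if (b, Suc b) \<in> l i z then q else 1) * markov m (basis (cap b (l i z))) (e' \<alpha>')
    - (if 2 \<le> b then (Delta (b-2) / Delta (b-1)) * markov (Suc m) (basis (l i z)) (e' ((b-1) # \<alpha>')) else 0)"
proof -
  have y: "l i z \<in> D (Suc m)" using l_D[OF z i] .
  have bb: "b \<le> 2*m+1" using b T_le by simp
  show ?thesis
  proof (cases "2 \<le> b")
    case True
    have "e' (b # \<alpha>') = (\<lambda>N. lin_l b (e' \<alpha>') N - (Delta (b-2) / Delta (b-1)) * e' ((b-1) # \<alpha>') N)"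
      using ERec[OF b] True by simp
    then have "markov (Suc m) (basis (l i z)) (e' (b # \<alpha>')) = markov (Suc m) (basis (l i z)) (lin_l b (e' \<alpha>'))
      - (Delta (b-2) / Delta (b-1)) * markov (Suc m) (basis (l i z)) (e' ((b-1) # \<alpha>'))"
      by (simp only: markov_diff)
    then show ?thesis using ADJ[OF y b(1) bb] True by simp
  next
    case False
    then have "b = 1" using b by simp
    then show ?thesis using ERec[OF b] ADJ[OF y b(1) bb] by simp
  qed
qed

lemma Rlem: "1 \<le> b \<Longrightarrow> b \<le> T \<Longrightarrow> b + 2 \<le> i \<Longrightarrow> i \<le> T \<Longrightarrow> z \<in> D m \<Longrightarrow>
   markov (Suc m) (basis (l i z)) (e' (b # \<alpha>')) = 0"
proof (induction b arbitrary: i z rule: nat_less_induct)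
  case (1 b)
  have T3: "\<alpha>' \<noteq> [] \<and> 1 \<le> m \<and> T \<le> 2*m" using T_ge3 1 by simp
  have hdT: "T = Suc (hd \<alpha>')" using T_def T3 by simp
  have i: "1 \<le> i" "i \<le> 2*m+1" using 1 T3 by auto
  have c: "cap b (l i z) = l (i-2) (cap b z)" using C5(1)[of b i z] 1 by simp
  have zD: "z \<in> D (Suc (m-1))" using 1 T3 by simp
  have bb: "1 \<le> b" "b \<le> 2*(m-1)+1" using 1 hdT T3 by linarith+
  have cD: "cap b z \<in> D (m-1)" using cap_D[OF zD bb] .
  have G0: "markov m (basis (cap b (l i z))) (e' \<alpha>') = 0"
    unfolding c using IHP[OF _ _ _ cD, of "i-2"] T3 hdT 1 by simp
  have F0: "2 \<le> b \<Longrightarrow> markov (Suc m) (basis (l i z)) (e' ((b-1) # \<alpha>')) = 0"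
    using 1 by simp
  show ?case using ARec[OF 1(2,3,6) i] G0 F0 by simp
qed

lemma Qlem: "1 \<le> b \<Longrightarrow> Suc b \<le> T \<Longrightarrow> z \<in> D m \<Longrightarrow>
   markov (Suc m) (basis (l (Suc b) z)) (e' (b # \<alpha>')) = markov m (basis z) (e' \<alpha>')"
proof -
  assume b: "1 \<le> b" "Suc b \<le> T" and z: "z \<in> D m"
  have i: "1 \<le> Suc b" "Suc b \<le> 2*m+1" using b T_le by auto
  have F0: "2 \<le> b \<Longrightarrow> markov (Suc m) (basis (l (Suc b) z)) (e' ((b-1) # \<alpha>')) = 0"
    using Rlem[of "b-1" "Suc b" z] b z by simp
  show ?thesis using ARec[OF b(1) _ z i] b C3[OF z] F0 by simp
qed

lemma Mlem: "1 \<le> b \<Longrightarrow> b \<le> T \<Longrightarrow> z \<in> D m \<Longrightarrow>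
   markov (Suc m) (basis (l b z)) (e' (b # \<alpha>')) = Delta b / Delta (b-1) * markov m (basis z) (e' \<alpha>')"
proof -
  assume b: "1 \<le> b" "b \<le> T" and z: "z \<in> D m"
  have i: "1 \<le> b" "b \<le> 2*m+1" using b T_le by auto
  have A: "markov (Suc m) (basis (l b z)) (e' (b # \<alpha>')) = q * markov m (basis z) (e' \<alpha>')
    - (if 2 \<le> b then (Delta (b-2) / Delta (b-1)) * markov (Suc m) (basis (l b z)) (e' ((b-1) # \<alpha>')) else 0)"
    using ARec[OF b z i] C1 by (simp add: mem_l)
  show ?thesis
  proof (cases "2 \<le> b")
    case True
    have "markov (Suc m) (basis (l b z)) (e' ((b-1) # \<alpha>')) = markov m (basis z) (e' \<alpha>')"
      using Qlem[of "b-1" z] True b z by simp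
    then have "markov (Suc m) (basis (l b z)) (e' (b # \<alpha>')) =
       (q - Delta (b-2) / Delta (b-1)) * markov m (basis z) (e' \<alpha>')" using A True by (simp add: algebra_simps)
    also have "q - Delta (b-2) / Delta (b-1) = Delta b / Delta (b-1)"
      using Delta_nz[of "b-1"] Delta_rec[OF True] by (simp add: field_simps)
    finally show ?thesis .
  next
    case False
    then have "b = 1" using b by simp
    then show ?thesis using A by simp
  qed
qed

lemma Plem: "1 \<le> b \<Longrightarrow> b \<le> T \<Longrightarrow> 1 \<le> i \<Longrightarrow> i < b \<Longrightarrow> z \<in> D m \<Longrightarrow>
   markov (Suc m) (basis (l i z)) (e' (b # \<alpha>')) = 0"
proof (induction b arbitrary: i z rule: nat_less_induct)
  case (1 b)
  have b2: "2 \<le> b" using 1 by simp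
  have i: "1 \<le> i" "i \<le> 2*m+1" using 1 T_le by auto
  show ?case
  proof (cases "i + 2 \<le> b")
    case True
    have T3: "\<alpha>' \<noteq> [] \<and> 1 \<le> m \<and> T \<le> 2*m" using T_ge3 1 True by simp
    have hdT: "T = Suc (hd \<alpha>')" using T_def T3 by simp
    have c: "cap b (l i z) = l i (cap (b-2) z)" using C4(1)[OF True] by simp
    have zD: "z \<in> D (Suc (m-1))" using 1 T3 by simp
    have bb: "1 \<le> b-2" "b-2 \<le> 2*(m-1)+1" using 1 hdT T3 True by linarith+
    have cD: "cap (b-2) z \<in> D (m-1)" using cap_D[OF zD bb] .
    have G0: "markov m (basis (cap b (l i z))) (e' \<alpha>') = 0"
      unfolding c using IHP[OF _ _ _ cD, of i] T3 hdT 1 True by simp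
    have F0: "markov (Suc m) (basis (l i z)) (e' ((b-1) # \<alpha>')) = 0"
      using 1 True by simp
    show ?thesis using ARec[OF 1(2,3,6) i] G0 F0 b2 by simp
  next
    case False
    then have ib: "b = Suc i" using 1 by simp
    have c: "cap b (l i z) = z" "(b, Suc b) \<notin> l i z" using C2[OF 1(6), of i] ib by auto
    have M: "markov (Suc m) (basis (l i z)) (e' ((b-1) # \<alpha>')) = Delta (b-1) / Delta (b-2) * markov m (basis z) (e' \<alpha>')"
      using Mlem[of "b-1" z] 1 ib by simp
    show ?thesis using ARec[OF 1(2,3,6) i] c M b2 Delta_nz[of "b-1"] Delta_nz[of "b-2"] by simp
  qed
qed

end

lemma main_ind:
  "restricted m \<alpha> \<Longrightarrow>
    (\<alpha> \<noteq> [] \<longrightarrow> (\<forall>i z. 1 \<le> i \<longrightarrow> i < hd \<alpha> \<longrightarrow> z \<in> D (m-1) \<longrightarrow> markov m (basis (l i z)) (e' \<alpha>) = 0)) \<and>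
    (\<forall>\<beta>. restricted m \<beta> \<longrightarrow> lex_less \<beta> \<alpha> \<longrightarrow> markov m (basis (e \<beta>)) (e' \<alpha>) = 0) \<and>
    markov m (basis (e \<alpha>)) (e' \<alpha>) = (\<Prod>i<m. Delta (\<alpha> ! i) / Delta (\<alpha> ! i - 1))"
proof (induction m arbitrary: \<alpha>)
  case 0
  then have a: "\<alpha> = []" by (simp add: restricted_0)
  have "markov 0 (basis {}) (basis {}) = 1"
    by (simp add: markov_def D0 loops_def basis_def)
  then have "markov 0 (basis (e [])) (e' []) = 1" by (simp add: e_Nil)
  then show ?case using a by (auto simp: restricted_0 lex_less_def)
next
  case (Suc m)
  obtain a \<alpha>' where a: "\<alpha> = a # \<alpha>'" "restricted m \<alpha>'" "e \<alpha> = l a (e \<alpha>')" "1 \<le> a" "a \<le> 2*m+1"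
    "\<alpha>' = [] \<Longrightarrow> a = 1" "\<alpha>' \<noteq> [] \<Longrightarrow> a \<le> Suc (hd \<alpha>')"
    using restricted_cons[OF Suc.prems] by metis
  note IH = Suc.IH[OF a(2)]
  define T where "T = (if \<alpha>' = [] then 1 else Suc (hd \<alpha>'))"
  have IHP: "\<forall>i z. \<alpha>' \<noteq> [] \<longrightarrow> 1 \<le> i \<longrightarrow> i < hd \<alpha>' \<longrightarrow> z \<in> D (m-1) \<longrightarrow> markov m (basis (l i z)) (e' \<alpha>') = 0"
    using IH by blast
  have aT: "a \<le> T" using a T_def by auto
  note P = Plem[OF a(2) IHP T_def]
  note M = Mlem[OF a(2) IHP T_def]
  have eD: "e \<alpha>' \<in> D m" using restricted_e(1)[OF a(2)] .
  have c1: "\<forall>i z. 1 \<le> i \<longrightarrow> i < hd \<alpha> \<longrightarrow> z \<in> D (Suc m - 1) \<longrightarrow> markov (Suc m) (basis (l i z)) (e' \<alpha>) = 0"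
    using P[OF a(4) aT] a(1) by simp
  have c2: "markov (Suc m) (basis (e \<beta>)) (e' \<alpha>) = 0" if \<beta>: "restricted (Suc m) \<beta>" "lex_less \<beta> \<alpha>" for \<beta>
  proof -
    obtain b \<beta>' where b: "\<beta> = b # \<beta>'" "restricted m \<beta>'" "e \<beta> = l b (e \<beta>')" "1 \<le> b"
      using restricted_cons[OF \<beta>(1)] by metis
    have eD': "e \<beta>' \<in> D m" using restricted_e(1)[OF b(2)] .
    have "b < a \<or> (b = a \<and> lex_less \<beta>' \<alpha>')" using \<beta>(2) unfolding a(1) b(1) lex_cons by simp
    then show ?thesis
    proof
      assume "b < a"
      then show ?thesis using P[OF a(4) aT b(4) _ eD'] b(3) a(1) by simp
    next
      assume h: "b = a \<and> lex_less \<beta>' \<alpha>'"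
      then have "markov m (basis (e \<beta>')) (e' \<alpha>') = 0" using IH b(2) by blast
      then show ?thesis using M[OF a(4) aT eD'] b(3) a(1) h by simp
    qed
  qed
  have c3: "markov (Suc m) (basis (e \<alpha>)) (e' \<alpha>) = (\<Prod>i<Suc m. Delta (\<alpha> ! i) / Delta (\<alpha> ! i - 1))"
  proof -
    have "markov (Suc m) (basis (e \<alpha>)) (e' \<alpha>) = Delta a / Delta (a-1) * markov m (basis (e \<alpha>')) (e' \<alpha>')"
      using M[OF a(4) aT eD] a(1,3) by simp
    also have "\<dots> = Delta a / Delta (a-1) * (\<Prod>i<m. Delta (\<alpha>' ! i) / Delta (\<alpha>' ! i - 1))"
      using IH by simp
    also have "\<dots> = (\<Prod>i<Suc m. Delta (\<alpha> ! i) / Delta (\<alpha> ! i - 1))"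
      unfolding a(1) prod.lessThan_Suc_shift by simp
    finally show ?thesis .
  qed
  show ?case using c1 c2 c3 by blast
qed

theorem mainTheorem2:
  fixes n :: nat and a b :: "nat list"
  assumes "n \<ge> 1" and "restricted n a" and "restricted n b"
  shows "(lex_less b a \<longrightarrow> markov n (basis (e b)) (e' a) = 0) \<and>
         markov n (basis (e a)) (e' a) = (\<Prod>i<n. Delta (a ! i) / Delta (a ! i - 1))"
  using main_ind[OF assms(2)] assms(3) by blast

end
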